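(* Let $(\mathcal H,\mathfrak A_0)$ be a Hilbert quasi *-algebra and $\xi\in\mathcal H$. Then: (i) ${\sf R}(\xi^* )=\{\eta\in D((L_\xi\restriction_{\mathfrak A_0^2})^* ):\ \eta y\in D(L_\xi^* )\ \text{for all } y\in\mathfrak A_0\}$; (ii) if $(\mathcal H,\mathfrak A_0)$ has a unit, then ${\sf R}(\xi^* )=D(L_\xi^* )$; (iii) if $(\mathcal H,\mathfrak A_0)$ has a unit and ${\sf R}(\xi^* )=\mathcal H$, then $\overline{L}_\xi$ and $\overline{L}_{\xi^*}$ are bounded operators.
   Context: A Hilbert algebra is a *-algebra $\mathfrak A_0$ with an inner product $\langle\cdot,\cdot\rangle$ such that (i) for each $x$, $y\mapsto xy$ is continuous for the inner product norm; (ii) $\langle xy,z\rangle=\langle y,x^*z\rangle$ for all $x,y,z$; (iii) $\langle x,y\rangle=\langle y^*,x^*\rangle$ for all $x,y$; (iv) the linear span of $\{xy:x,y\in\mathfrak A_0\}$ is dense in $\mathfrak A_0$. Let $\mathcal H$ be the Hilbert space completion of $\mathfrak A_0$; the involution extends isometrically to $\mathcal H$, and the products $\xi x$, $x\xi$ for $\xi\in\mathcal H$, $x\in\mathfrak A_0$ are defined by continuity. It is assumed that (A): if $\xi\in\mathcal H$ and $\xi x=0$ for all $x\in\mathfrak A_0$ then $\xi=0$. With these operations $(\mathcal H,\mathfrak A_0)$ is a Banach quasi *-algebra, called a Hilbert quasi *-algebra. A unit is $e\in\mathfrak A_0$ with $\xi e=e\xi=\xi$ for all $\xi\in\mathcal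 H$. For $\xi\in\mathcal H$, $L_\xi$ is the operator in $\mathcal H$ with domain $\mathfrak A_0$ given by $L_\xi x=\xi x$; $\overline{L}_\xi$ is its closure. $\mathfrak A_0^2$ denotes the linear span of $\{xy:x,y\in\mathfrak A_0\}$. Weak multiplication: for $\xi,\eta\in\mathcal H$, $\xi$ is a left multiplier of $\eta$ (and $\eta$ a right multiplier of $\xi$) if there is $\zeta\in\mathcal H$ with $\langle\eta x,\xi^*y\rangle=\langle\zeta x,y\rangle$ for all $x,y\in\mathfrak A_0$; then $\xi\square\eta:=\zeta$. ${\sf R}(\xi)$ denotes the set of right multipliers of $\xi$, i.e. of those $\eta$ for which $\xi\square\eta$ is defined. *)

theory Defs
  imports Complex_Main
begin

text \<open>A Hilbert quasi *-algebra is represented by a carrier type 'h (the Hilbert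
space H, whose additive structure comes from the class ab_group_add), together with
complex scalar multiplication, an inner product, the involution on H, the partial
multiplication (meaningful when one factor lies in A0) and the subspace A0.\<close>

record 'h qsa =
  smult :: "complex \<Rightarrow> 'h \<Rightarrow> 'h"
  inner :: "'h \<Rightarrow> 'h \<Rightarrow> complex"
  star  :: "'h \<Rightarrow> 'h"
  mult  :: "'h \<Rightarrow> 'h \<Rightarrow> 'h"
  alg   :: "'h set"

definition hnorm :: "('h::ab_group_add) qsa \<Rightarrow> 'h \<Rightarrow> real" where
  "hnorm Q x = sqrt (Re (inner Q x x))"

definition hconv :: "('h::ab_group_add) qsa \<Rightarrow> (nat \<Rightarrow> 'h) \<Rightarrow> 'h \<Rightarrow> bool" where
  "hconv Q s l \<longleftrightarrow> (\<lambda>n. hnorm Q (s n - l)) \<longlonglongrightarrow> 0"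

definition hcauchy :: "('h::ab_group_add) qsa \<Rightarrow> (nat \<Rightarrow> 'h) \<Rightarrow> bool" where
  "hcauchy Q s \<longleftrightarrow> (\<forall>e>0. \<exists>N. \<forall>m\<ge>N. \<forall>n\<ge>N. hnorm Q (s m - s n) < e)"

definition hclosure :: "('h::ab_group_add) qsa \<Rightarrow> 'h set \<Rightarrow> 'h set" where
  "hclosure Q S = {l. \<exists>s. (\<forall>n. s n \<in> S) \<and> hconv Q s l}"

definition hcont :: "('h::ab_group_add) qsa \<Rightarrow> ('h \<Rightarrow> 'h) \<Rightarrow> bool" where
  "hcont Q f \<longleftrightarrow> (\<forall>s l. hconv Q s l \<longrightarrow> hconv Q (\<lambda>n. f (s n)) (f l))"

definition hspan :: "('h::ab_group_add) qsa \<Rightarrow> 'h set \<Rightarrow> 'h set" where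
  "hspan Q S = {x. \<exists>(n::nat) (c::nat \<Rightarrow> complex) (v::nat \<Rightarrow> 'h). (\<forall>i<n. v i \<in> S) \<and> x = (\<Sum>i<n. smult Q (c i) (v i))}"

text \<open>Complex Hilbert space (inner product linear in the first argument).\<close>
definition complex_hilbert_space :: "('h::ab_group_add) qsa \<Rightarrow> bool" where
  "complex_hilbert_space Q \<longleftrightarrow>
     (\<forall>a x y. smult Q a (x + y) = smult Q a x + smult Q a y) \<and>
     (\<forall>a b x. smult Q (a + b) x = smult Q a x + smult Q b x) \<and>
     (\<forall>a b x. smult Q a (smult Q b x) = smult Q (a * b) x) \<and>
     (\<forall>x. smult Q 1 x = x) \<and>
     (\<forall>x y z. inner Q (x + y) z = inner Q x z + inner Q y z) \<and>
     (\<forall>a x y. inner Q (smult Q a x) y = a * inner Q x y) \<and>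
     (\<forall>x y. inner Q x y = cnj (inner Q y x)) \<and>
     (\<forall>x. Im (inner Q x x) = 0 \<and> Re (inner Q x x) \<ge> 0) \<and>
     (\<forall>x. inner Q x x = 0 \<longrightarrow> x = 0) \<and>
     (\<forall>s. hcauchy Q s \<longrightarrow> (\<exists>l. hconv Q s l))"

definition alg_sq :: "('h::ab_group_add) qsa \<Rightarrow> 'h set" where
  "alg_sq Q = hspan Q {mult Q x y | x y. x \<in> alg Q \<and> y \<in> alg Q}"

text \<open>(H, A0) is a Hilbert quasi *-algebra: H is a complex Hilbert space in which
A0 is a dense subspace (so H is the completion of A0); A0 is a *-algebra which is a
Hilbert algebra (conditions (i)-(iv)); the involution and the products xi x, x xi
(x in A0) on H are the continuous extensions of those of A0; and condition (A) holds.\<close>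
definition hilbert_quasi_star_algebra :: "('h::ab_group_add) qsa \<Rightarrow> bool" where
  "hilbert_quasi_star_algebra Q \<longleftrightarrow>
     complex_hilbert_space Q \<and>
     \<comment> \<open>A0 is a complex subspace, dense in H\<close>
     0 \<in> alg Q \<and>
     (\<forall>x\<in>alg Q. \<forall>y\<in>alg Q. x + y \<in> alg Q) \<and>
     (\<forall>a. \<forall>x\<in>alg Q. smult Q a x \<in> alg Q) \<and>
     hclosure Q (alg Q) = UNIV \<and>
     \<comment> \<open>A0 is a *-algebra\<close>
     (\<forall>x\<in>alg Q. \<forall>y\<in>alg Q. mult Q x y \<in> alg Q) \<and>
     (\<forall>x\<in>alg Q. star Q x \<in> alg Q) \<and>
     (\<forall>x\<in>alg Q. \<forall>y\<in>alg Q. \<forall>z\<in>alg Q. mult Q (mult Q x y) z = mult Q x (mult Q y z)) \<and>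
     (\<forall>x\<in>alg Q. \<forall>y\<in>alg Q. \<forall>z\<in>alg Q. mult Q x (y + z) = mult Q x y + mult Q x z) \<and>
     (\<forall>x\<in>alg Q. \<forall>y\<in>alg Q. \<forall>z\<in>alg Q. mult Q (x + y) z = mult Q x z + mult Q y z) \<and>
     (\<forall>a. \<forall>x\<in>alg Q. \<forall>y\<in>alg Q. mult Q (smult Q a x) y = smult Q a (mult Q x y)) \<and>
     (\<forall>a. \<forall>x\<in>alg Q. \<forall>y\<in>alg Q. mult Q x (smult Q a y) = smult Q a (mult Q x y)) \<and>
     (\<forall>x\<in>alg Q. star Q (star Q x) = x) \<and>
     (\<forall>x\<in>alg Q. \<forall>y\<in>alg Q. star Q (x + y) = star Q x + star Q y) \<and>
     (\<forall>a. \<forall>x\<in>alg Q. star Q (smult Q a x) = smult Q (cnj a) (star Q x)) \<and>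
     (\<forall>x\<in>alg Q. \<forall>y\<in>alg Q. star Q (mult Q x y) = mult Q (star Q y) (star Q x)) \<and>
     \<comment> \<open>Hilbert algebra (ii), (iii), (iv)\<close>
     (\<forall>x\<in>alg Q. \<forall>y\<in>alg Q. \<forall>z\<in>alg Q. inner Q (mult Q x y) z = inner Q y (mult Q (star Q x) z)) \<and>
     (\<forall>x\<in>alg Q. \<forall>y\<in>alg Q. inner Q x y = inner Q (star Q y) (star Q x)) \<and>
     alg Q \<subseteq> hclosure Q (alg_sq Q) \<and>
     \<comment> \<open>Hilbert algebra (i), and the extensions to H by continuity\<close>
     (\<forall>x\<in>alg Q. hcont Q (\<lambda>\<xi>. mult Q x \<xi>)) \<and>
     (\<forall>x\<in>alg Q. hcont Q (\<lambda>\<xi>. mult Q \<xi> x)) \<and>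
     hcont Q (star Q) \<and>
     \<comment> \<open>condition (A)\<close>
     (\<forall>\<xi>. (\<forall>x\<in>alg Q. mult Q \<xi> x = 0) \<longrightarrow> \<xi> = 0)"

definition has_unit :: "('h::ab_group_add) qsa \<Rightarrow> bool" where
  "has_unit Q \<longleftrightarrow> (\<exists>e\<in>alg Q. \<forall>\<xi>. mult Q \<xi> e = \<xi> \<and> mult Q e \<xi> = \<xi>)"

definition adj_dom :: "('h::ab_group_add) qsa \<Rightarrow> 'h set \<Rightarrow> ('h \<Rightarrow> 'h) \<Rightarrow> 'h set" where
  "adj_dom Q D T = {\<eta>. \<exists>\<zeta>. \<forall>x\<in>D. inner Q (T x) \<eta> = inner Q x \<zeta>}"

definition Lop :: "('h::ab_group_add) qsa \<Rightarrow> 'h \<Rightarrow> 'h \<Rightarrow> 'h" where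
  "Lop Q \<xi> = (\<lambda>x. mult Q \<xi> x)"

text \<open>R(xi): right multipliers of xi (eta such that xi square eta is defined).\<close>
definition right_mult :: "('h::ab_group_add) qsa \<Rightarrow> 'h \<Rightarrow> 'h set" where
  "right_mult Q \<xi> = {\<eta>. \<exists>\<zeta>. \<forall>x\<in>alg Q. \<forall>y\<in>alg Q.
      inner Q (mult Q \<eta> x) (mult Q (star Q \<xi>) y) = inner Q (mult Q \<zeta> x) y}"

definition closure_graph :: "('h::ab_group_add) qsa \<Rightarrow> 'h set \<Rightarrow> ('h \<Rightarrow> 'h) \<Rightarrow> ('h \<times> 'h) set" where
  "closure_graph Q D T = {(u, v). \<exists>s. (\<forall>n. s n \<in> D) \<and> hconv Q s u \<and> hconv Q (\<lambda>n. T (s n)) v}"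

text \<open>A (graph of an) operator is a bounded operator on H: everywhere defined and
norm-bounded (boundedness forces single-valuedness).\<close>
definition bounded_operator_graph :: "('h::ab_group_add) qsa \<Rightarrow> ('h \<times> 'h) set \<Rightarrow> bool" where
  "bounded_operator_graph Q G \<longleftrightarrow>
     (\<forall>u. \<exists>v. (u, v) \<in> G) \<and> (\<exists>C. \<forall>(u, v)\<in>G. hnorm Q v \<le> C * hnorm Q u)"

end

theory Submission
  imports Defs
begin

locale chs =
  fixes Q :: "('h::ab_group_add) qsa"
  assumes chs: "complex_hilbert_space Q"
begin

lemmas C = chs[unfolded complex_hilbert_space_def]

abbreviation "ip \<equiv> inner Q"
abbreviation "sm \<equiv> smult Q"
abbreviation "nm \<equiv> hnorm Q"

lemma sm_add: "sm a (x+y) = sm a x + sm a y" by (rule C[THEN conjunct1, rule_format])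
lemma sm_add2: "sm (a+b) x = sm a x + sm b x" by (rule C[THEN conjunct2, THEN conjunct1, rule_format])
lemma sm_sm: "sm a (sm b x) = sm (a*b) x" by (rule C[THEN conjunct2, THEN conjunct2, THEN conjunct1, rule_format])
lemma sm_one[simp]: "sm 1 x = x" by (rule C[THEN conjunct2, THEN conjunct2, THEN conjunct2, THEN conjunct1, rule_format])
lemma ip_add: "ip (x+y) z = ip x z + ip y z" by (rule C[THEN conjunct2, THEN conjunct2, THEN conjunct2, THEN conjunct2, THEN conjunct1, rule_format])
lemma ip_sm: "ip (sm a x) y = a * ip x y" by (rule C[THEN conjunct2, THEN conjunct2, THEN conjunct2, THEN conjunct2, THEN conjunct2, THEN conjunct1, rule_format])
lemma ip_cnj: "ip x y = cnj (ip y x)" by (rule C[THEN conjunct2, THEN conjunct2, THEN conjunct2, THEN conjunct2, THEN conjunct2, THEN conjunct2, THEN conjunct1, rule_format])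
lemma ip_self_im: "Im (ip x x) = 0" by (rule C[THEN conjunct2, THEN conjunct2, THEN conjunct2, THEN conjunct2, THEN conjunct2, THEN conjunct2, THEN conjunct2, THEN conjunct1, THEN spec, THEN conjunct1])
lemma ip_self_re: "Re (ip x x) \<ge> 0" by (rule C[THEN conjunct2, THEN conjunct2, THEN conjunct2, THEN conjunct2, THEN conjunct2, THEN conjunct2, THEN conjunct2, THEN conjunct1, THEN spec, THEN conjunct2])
lemma ip_self_zero: "ip x x = 0 \<Longrightarrow> x = 0" by (rule C[THEN conjunct2, THEN conjunct2, THEN conjunct2, THEN conjunct2, THEN conjunct2, THEN conjunct2, THEN conjunct2, THEN conjunct2, THEN conjunct1, rule_format])
lemma complete: "hcauchy Q s \<Longrightarrow> \<exists>l. hconv Q s l" by (rule C[THEN conjunct2, THEN conjunct2, THEN conjunct2, THEN conjunct2, THEN conjunct2, THEN conjunct2, THEN conjunct2, THEN conjunct2, THEN conjunct2, rule_format])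

lemma sm_zero[simp]: "sm a 0 = 0"
  using sm_add[of a 0 0] by simp
lemma sm_zero2[simp]: "sm 0 x = 0"
  using sm_add2[of 0 0 x] by simp
lemma sm_neg1: "sm (-1) x = - x"
proof -
  have "x + sm (-1) x = 0" using sm_add2[of 1 "-1" x] by simp
  then show ?thesis by (metis add_eq_0_iff)
qed
lemma sm_minus: "sm a (- x) = - sm a x"
proof -
  have "sm a x + sm a (- x) = 0" using sm_add[of a x "-x"] by simp
  then show ?thesis by (metis add_eq_0_iff)
qed
lemma sm_diff: "sm a (x - y) = sm a x - sm a y"
  using sm_add[of a x "-y"] sm_minus[of a y] by simp
lemma sm_uminus2: "sm (-a) x = - sm a x"
proof -
  have "sm a x + sm (-a) x = 0" using sm_add2[of a "-a" x] by simp
  then show ?thesis by (metis add_eq_0_iff)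
qed

lemma ip_zero[simp]: "ip 0 y = 0"
  using ip_add[of 0 0 y] by simp
lemma ip_zero2[simp]: "ip y 0 = 0"
  using ip_cnj[of y 0] by simp
lemma ip_add2: "ip x (y+z) = ip x y + ip x z"
  using ip_cnj[of x "y+z"] ip_add[of y z x] ip_cnj[of y x] ip_cnj[of z x] by simp
lemma ip_sm2: "ip x (sm a y) = cnj a * ip x y"
  using ip_cnj[of x "sm a y"] ip_sm[of a y x] ip_cnj[of y x] by simp
lemma ip_minus: "ip (-x) y = - ip x y"
proof -
  have "ip x y + ip (-x) y = 0" using ip_add[of x "-x" y] by simp
  then show ?thesis by (metis add_eq_0_iff)
qed
lemma ip_minus2: "ip y (-x) = - ip y x"
proof -
  have "ip y x + ip y (-x) = 0" using ip_add2[of y x "-x"] by simp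
  then show ?thesis by (metis add_eq_0_iff)
qed
lemma ip_diff: "ip (x - y) z = ip x z - ip y z"
  using ip_add[of x "-y" z] ip_minus[of y z] by simp
lemma ip_diff2: "ip z (x - y) = ip z x - ip z y"
  using ip_add2[of z x "-y"] ip_minus2[of z y] by simp

lemma nm_ge0: "nm x \<ge> 0" using ip_self_re[of x] by (simp add: hnorm_def)
lemma nm_sq: "(nm x)^2 = Re (ip x x)"
  using ip_self_re[of x] by (simp add: hnorm_def)
lemma ip_self: "ip x x = complex_of_real ((nm x)^2)"
  using ip_self_im[of x] nm_sq[of x] by (simp add: complex_eq_iff)
lemma nm_zero_iff[simp]: "nm x = 0 \<longleftrightarrow> x = 0"
proof
  assume "nm x = 0" then have "ip x x = 0" using ip_self[of x] by simp
  then show "x = 0" by (rule ip_self_zero)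
qed (simp add: hnorm_def)
lemma nm_zero[simp]: "nm 0 = 0" by simp

lemma nm_sm: "nm (sm a x) = cmod a * nm x"
proof -
  have "ip (sm a x) (sm a x) = a * cnj a * ip x x" by (simp add: ip_sm ip_sm2)
  also have "\<dots> = complex_of_real ((cmod a * nm x)^2)"
    using complex_norm_square[of a] ip_self[of x] by (simp add: power_mult_distrib)
  finally have eq: "ip (sm a x) (sm a x) = complex_of_real ((cmod a * nm x)^2)" .
  have "(nm (sm a x))^2 = ((cmod a) * nm x)^2"
    unfolding nm_sq by (simp only: eq Re_complex_of_real)
  then show ?thesis using nm_ge0 by (simp add: power2_eq_iff_nonneg)
qed

lemma nm_neg: "nm (-x) = nm x"
  using nm_sm[of "-1" x] sm_neg1[of x] by simp
lemma nm_commute: "nm (x - y) = nm (y - x)"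
  using nm_neg[of "y - x"] by simp

lemma cauchy_schwarz: "cmod (ip x y) \<le> nm x * nm y"
proof (cases "y = 0")
  case True then show ?thesis by simp
next
  case False
  define Y where "Y = (nm y)^2"
  have Ypos: "Y > 0" using False nm_ge0[of y] unfolding Y_def by simp
  define p where "p = ip x y"
  define a where "a = p / complex_of_real Y"
  have yy: "ip y y = complex_of_real Y" by (simp add: Y_def ip_self)
  have yx: "ip y x = cnj p" using ip_cnj[of y x] by (simp add: p_def)
  have "ip (x - sm a y) (x - sm a y) = ip x x - a * ip y x - cnj a * ip x y + a * cnj a * ip y y"
    by (simp add: ip_diff ip_diff2 ip_sm ip_sm2 algebra_simps)
  also have "\<dots> = ip x x - p * cnj p / complex_of_real Y"
    using Ypos by (simp add: yy yx a_def p_def[symmetric] field_simps)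
  finally have e: "ip (x - sm a y) (x - sm a y) = ip x x - p * cnj p / complex_of_real Y" .
  have "0 \<le> Re (ip (x - sm a y) (x - sm a y))" by (rule ip_self_re)
  also have "\<dots> = (nm x)^2 - (cmod p)^2 / Y"
  proof -
    have pc: "p * cnj p = complex_of_real ((cmod p)^2)" using complex_norm_square[of p] by simp
    have "ip x x - p * cnj p / complex_of_real Y = complex_of_real ((nm x)^2 - (cmod p)^2 / Y)"
      by (simp add: pc ip_self)
    then show ?thesis unfolding e by (simp only: Re_complex_of_real)
  qed
  finally have "(cmod p)^2 \<le> (nm x)^2 * Y" using Ypos by (simp add: field_simps)
  then have "(cmod p)^2 \<le> (nm x * nm y)^2" by (simp add: Y_def power_mult_distrib)
  then show ?thesis unfolding p_def using nm_ge0 by (meson mult_nonneg_nonneg power2_le_imp_le)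
qed

lemma triangle: "nm (x + y) \<le> nm x + nm y"
proof -
  have "(nm (x+y))^2 = Re (ip x x + ip x y + ip y x + ip y y)"
    by (simp add: nm_sq ip_add ip_add2 algebra_simps)
  also have "\<dots> = (nm x)^2 + (nm y)^2 + Re (ip x y) + Re (ip y x)" by (simp add: nm_sq)
  also have "\<dots> \<le> (nm x)^2 + (nm y)^2 + 2 * (nm x * nm y)"
  proof -
    have "Re (ip x y) \<le> nm x * nm y" using cauchy_schwarz[of x y] complex_Re_le_cmod[of "ip x y"] by simp
    moreover have "Re (ip y x) \<le> nm x * nm y" using cauchy_schwarz[of y x] complex_Re_le_cmod order_trans
      by (metis mult.commute)
    ultimately show ?thesis by simp
  qed
  also have "\<dots> = (nm x + nm y)^2" by (simp add: power2_sum)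
  finally show ?thesis using nm_ge0 by (meson add_nonneg_nonneg power2_le_imp_le)
qed

lemma triangle_diff: "nm (x - z) \<le> nm (x - y) + nm (y - z)"
  using triangle[of "x - y" "y - z"] by simp

lemma nm_rev: "\<bar>nm x - nm y\<bar> \<le> nm (x - y)"
  using triangle_diff[of x 0 y] triangle_diff[of y 0 x] nm_commute[of x y] nm_neg by (simp add: abs_le_iff)


lemma null_cmp: assumes "\<And>n. 0 \<le> f n" "\<And>n. f n \<le> g n" "g \<longlonglongrightarrow> 0"
  shows "f \<longlonglongrightarrow> (0::real)"
  by (rule tendsto_sandwich[where f="\<lambda>n. 0::real" and g=f and h=g]) (use assms in auto)

lemma hconv_const: "hconv Q (\<lambda>n. l) l" by (simp add: hconv_def)

lemma hconv_add: assumes "hconv Q s l" "hconv Q t m"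
  shows "hconv Q (\<lambda>n. s n + t n) (l + m)"
  unfolding hconv_def
proof (rule null_cmp)
  show "(\<lambda>n. nm (s n - l) + nm (t n - m)) \<longlonglongrightarrow> 0"
    using assms tendsto_add[of "\<lambda>n. nm (s n - l)" 0 _ "\<lambda>n. nm (t n - m)" 0] by (simp add: hconv_def)
  fix n show "nm (s n + t n - (l + m)) \<le> nm (s n - l) + nm (t n - m)"
    using triangle[of "s n - l" "t n - m"] by (simp add: algebra_simps)
qed (rule nm_ge0)

lemma hconv_sm: assumes "hconv Q s l" shows "hconv Q (\<lambda>n. sm a (s n)) (sm a l)"
proof -
  have "(\<lambda>n. cmod a * nm (s n - l)) \<longlonglongrightarrow> cmod a * 0"
    using tendsto_mult_left[of "\<lambda>n. nm (s n - l)" 0 sequentially "cmod a"] assms by (simp add: hconv_def)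
  then show ?thesis by (simp add: hconv_def sm_diff[symmetric] nm_sm)
qed

lemma hconv_neg: assumes "hconv Q s l" shows "hconv Q (\<lambda>n. - s n) (- l)"
  using hconv_sm[OF assms, of "-1"] by (simp add: sm_neg1)

lemma hconv_diff: assumes "hconv Q s l" "hconv Q t m"
  shows "hconv Q (\<lambda>n. s n - t n) (l - m)"
  using hconv_add[OF assms(1) hconv_neg[OF assms(2)]] by simp

lemma hconv_unique: assumes "hconv Q s l" "hconv Q s m" shows "l = m"
proof -
  have "(\<lambda>n. nm (s n - l) + nm (s n - m)) \<longlonglongrightarrow> 0 + 0"
    using assms by (intro tendsto_add) (auto simp: hconv_def)
  moreover have "nm (l - m) \<le> nm (s n - l) + nm (s n - m)" for n
    using triangle_diff[where x=l and y="s n" and z=m] nm_commute[of l "s n"] by simp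
  ultimately have "nm (l - m) \<le> 0"
    using LIMSEQ_le_const[of "\<lambda>n. nm (s n - l) + nm (s n - m)" 0 "nm (l - m)"] by auto
  then show ?thesis using nm_ge0[of "l - m"] by simp
qed

lemma hconv_ip: assumes "hconv Q s l" shows "(\<lambda>n. ip (s n) y) \<longlonglongrightarrow> ip l y"
proof -
  have "(\<lambda>n. nm (s n - l) * nm y) \<longlonglongrightarrow> 0 * nm y"
    using assms unfolding hconv_def by (rule tendsto_mult_right)
  then have lim: "(\<lambda>n. nm (s n - l) * nm y) \<longlonglongrightarrow> 0" by simp
  have b: "norm (ip (s n) y - ip l y) \<le> nm (s n - l) * nm y" for n
    unfolding ip_diff[symmetric] by (rule cauchy_schwarz)
  have "(\<lambda>n. norm (ip (s n) y - ip l y)) \<longlonglongrightarrow> 0"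
    by (rule null_cmp[OF norm_ge_zero b lim])
  from tendsto_norm_zero_cancel[OF this] show ?thesis by (rule LIM_zero_cancel)
qed

lemma hconv_ip2: assumes "hconv Q s l" shows "(\<lambda>n. ip y (s n)) \<longlonglongrightarrow> ip y l"
proof -
  have e: "\<And>t. ip y t = cnj (ip t y)" by (rule ip_cnj)
  show ?thesis unfolding e by (rule tendsto_cnj[OF hconv_ip[OF assms]])
qed

lemma hconv_nm: assumes "hconv Q s l" shows "(\<lambda>n. nm (s n)) \<longlonglongrightarrow> nm l"
proof -
  have b: "norm (nm (s n) - nm l) \<le> nm (s n - l)" for n
    unfolding real_norm_def by (rule nm_rev)
  have "(\<lambda>n. norm (nm (s n) - nm l)) \<longlonglongrightarrow> 0"
    by (rule null_cmp[OF norm_ge_zero b assms[unfolded hconv_def]])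
  from tendsto_norm_zero_cancel[OF this] show ?thesis by (rule LIM_zero_cancel)
qed

lemma hconv_cauchy: assumes "hconv Q s l" shows "hcauchy Q s"
  unfolding hcauchy_def
proof (intro allI impI)
  fix e :: real assume e: "e > 0"
  have "(\<lambda>n. nm (s n - l)) \<longlonglongrightarrow> 0" using assms by (simp add: hconv_def)
  then obtain N where N: "\<And>n. n \<ge> N \<Longrightarrow> norm (nm (s n - l) - 0) < e/2"
    using LIMSEQ_D[of "\<lambda>n. nm (s n - l)" 0 "e/2"] e by auto
  show "\<exists>N. \<forall>m\<ge>N. \<forall>n\<ge>N. nm (s m - s n) < e"
  proof (intro exI allI impI)
    fix m n assume "m \<ge> N" "n \<ge> N"
    then have "nm (s m - l) < e/2" "nm (s n - l) < e/2" using N by (auto simp: abs_of_nonneg[OF nm_ge0])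
    then show "nm (s m - s n) < e" using triangle_diff[where x="s m" and y=l and z="s n"] nm_commute[of "s n" l] by simp
  qed
qed

definition ccont :: "('h \<Rightarrow> complex) \<Rightarrow> bool" where
  "ccont f \<longleftrightarrow> (\<forall>s l. hconv Q s l \<longrightarrow> (\<lambda>n. f (s n)) \<longlonglongrightarrow> f l)"

lemma hcont_comp: "hcont Q f \<Longrightarrow> hcont Q g \<Longrightarrow> hcont Q (\<lambda>x. g (f x))"
  by (simp add: hcont_def)
lemma hcont_id: "hcont Q (\<lambda>x. x)" by (simp add: hcont_def)
lemma hcont_const: "hcont Q (\<lambda>x. c)" by (simp add: hcont_def hconv_const)
lemma hcont_add: "hcont Q f \<Longrightarrow> hcont Q g \<Longrightarrow> hcont Q (\<lambda>x. f x + g x)"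
  by (simp add: hcont_def hconv_add)
lemma hcont_sm: "hcont Q f \<Longrightarrow> hcont Q (\<lambda>x. sm a (f x))"
  by (simp add: hcont_def hconv_sm)
lemma ccont_ip: "hcont Q f \<Longrightarrow> ccont (\<lambda>x. ip (f x) w)"
  by (simp add: hcont_def ccont_def hconv_ip)
lemma ccont_ip2: "hcont Q f \<Longrightarrow> ccont (\<lambda>x. ip w (f x))"
  by (simp add: hcont_def ccont_def hconv_ip2)

end

locale qsa = chs +
  assumes hq: "hilbert_quasi_star_algebra Q"
begin

abbreviation "A0 \<equiv> alg Q"
abbreviation "mul \<equiv> mult Q"
abbreviation "st \<equiv> star Q"

lemmas hq' = hq[unfolded hilbert_quasi_star_algebra_def]

lemma A0_zero: "0 \<in> A0" by (rule hq'[THEN conjunct2, THEN conjunct1])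
lemma A0_add: "x \<in> A0 \<Longrightarrow> y \<in> A0 \<Longrightarrow> x + y \<in> A0" by (rule hq'[THEN conjunct2, THEN conjunct2, THEN conjunct1, rule_format])
lemma A0_sm: "x \<in> A0 \<Longrightarrow> sm a x \<in> A0" by (rule hq'[THEN conjunct2, THEN conjunct2, THEN conjunct2, THEN conjunct1, rule_format])
lemma A0_dense: "hclosure Q A0 = UNIV" by (rule hq'[THEN conjunct2, THEN conjunct2, THEN conjunct2, THEN conjunct2, THEN conjunct1])
lemma A0_mul: "x \<in> A0 \<Longrightarrow> y \<in> A0 \<Longrightarrow> mul x y \<in> A0" by (rule hq'[THEN conjunct2, THEN conjunct2, THEN conjunct2, THEN conjunct2, THEN conjunct2, THEN conjunct1, rule_format])
lemma A0_st: "x \<in> A0 \<Longrightarrow> st x \<in> A0" by (rule hq'[THEN conjunct2, THEN conjunct2, THEN conjunct2, THEN conjunct2, THEN conjunct2, THEN conjunct2, THEN conjunct1, rule_format])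
lemma assoc: "x \<in> A0 \<Longrightarrow> y \<in> A0 \<Longrightarrow> z \<in> A0 \<Longrightarrow> mul (mul x y) z = mul x (mul y z)" by (rule hq'[THEN conjunct2, THEN conjunct2, THEN conjunct2, THEN conjunct2, THEN conjunct2, THEN conjunct2, THEN conjunct2, THEN conjunct1, rule_format])
lemma distr: "x \<in> A0 \<Longrightarrow> y \<in> A0 \<Longrightarrow> z \<in> A0 \<Longrightarrow> mul x (y + z) = mul x y + mul x z" by (rule hq'[THEN conjunct2, THEN conjunct2, THEN conjunct2, THEN conjunct2, THEN conjunct2, THEN conjunct2, THEN conjunct2, THEN conjunct2, THEN conjunct1, rule_format])
lemma mul_sm2: "x \<in> A0 \<Longrightarrow> y \<in> A0 \<Longrightarrow> mul x (sm a y) = sm a (mul x y)" by (rule hq'[THEN conjunct2, THEN conjunct2, THEN conjunct2, THEN conjunct2, THEN conjunct2, THEN conjunct2, THEN conjunct2, THEN conjunct2, THEN conjunct2, THEN conjunct2, THEN conjunct2, THEN conjunct1, rule_format])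
lemma stst: "x \<in> A0 \<Longrightarrow> st (st x) = x" by (rule hq'[THEN conjunct2, THEN conjunct2, THEN conjunct2, THEN conjunct2, THEN conjunct2, THEN conjunct2, THEN conjunct2, THEN conjunct2, THEN conjunct2, THEN conjunct2, THEN conjunct2, THEN conjunct2, THEN conjunct1, rule_format])
lemma st_mul: "x \<in> A0 \<Longrightarrow> y \<in> A0 \<Longrightarrow> st (mul x y) = mul (st y) (st x)" by (rule hq'[THEN conjunct2, THEN conjunct2, THEN conjunct2, THEN conjunct2, THEN conjunct2, THEN conjunct2, THEN conjunct2, THEN conjunct2, THEN conjunct2, THEN conjunct2, THEN conjunct2, THEN conjunct2, THEN conjunct2, THEN conjunct2, THEN conjunct2, THEN conjunct1, rule_format])
lemma hii: "x \<in> A0 \<Longrightarrow> y \<in> A0 \<Longrightarrow> z \<in> A0 \<Longrightarrow> ip (mul x y) z = ip y (mul (st x) z)" by (rule hq'[THEN conjunct2, THEN conjunct2, THEN conjunct2, THEN conjunct2, THEN conjunct2, THEN conjunct2, THEN conjunct2, THEN conjunct2, THEN conjunct2, THEN conjunct2, THEN conjunct2, THEN conjunct2, THEN conjunct2, THEN conjunct2, THEN conjunct2, THEN conjunct2, THEN conjunct1, rule_format])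
lemma hiii: "x \<in> A0 \<Longrightarrow> y \<in> A0 \<Longrightarrow> ip x y = ip (st y) (st x)" by (rule hq'[THEN conjunct2, THEN conjunct2, THEN conjunct2, THEN conjunct2, THEN conjunct2, THEN conjunct2, THEN conjunct2, THEN conjunct2, THEN conjunct2, THEN conjunct2, THEN conjunct2, THEN conjunct2, THEN conjunct2, THEN conjunct2, THEN conjunct2, THEN conjunct2, THEN conjunct2, THEN conjunct1, rule_format])
lemma cont_l: "x \<in> A0 \<Longrightarrow> hcont Q (\<lambda>\<xi>. mul x \<xi>)" by (rule hq'[THEN conjunct2, THEN conjunct2, THEN conjunct2, THEN conjunct2, THEN conjunct2, THEN conjunct2, THEN conjunct2, THEN conjunct2, THEN conjunct2, THEN conjunct2, THEN conjunct2, THEN conjunct2, THEN conjunct2, THEN conjunct2, THEN conjunct2, THEN conjunct2, THEN conjunct2, THEN conjunct2, THEN conjunct2, THEN conjunct1, rule_format])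
lemma cont_r: "x \<in> A0 \<Longrightarrow> hcont Q (\<lambda>\<xi>. mul \<xi> x)" by (rule hq'[THEN conjunct2, THEN conjunct2, THEN conjunct2, THEN conjunct2, THEN conjunct2, THEN conjunct2, THEN conjunct2, THEN conjunct2, THEN conjunct2, THEN conjunct2, THEN conjunct2, THEN conjunct2, THEN conjunct2, THEN conjunct2, THEN conjunct2, THEN conjunct2, THEN conjunct2, THEN conjunct2, THEN conjunct2, THEN conjunct2, THEN conjunct1, rule_format])
lemma cont_st: "hcont Q st" by (rule hq'[THEN conjunct2, THEN conjunct2, THEN conjunct2, THEN conjunct2, THEN conjunct2, THEN conjunct2, THEN conjunct2, THEN conjunct2, THEN conjunct2, THEN conjunct2, THEN conjunct2, THEN conjunct2, THEN conjunct2, THEN conjunct2, THEN conjunct2, THEN conjunct2, THEN conjunct2, THEN conjunct2, THEN conjunct2, THEN conjunct2, THEN conjunct2, THEN conjunct1])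

lemma A0_neg: "x \<in> A0 \<Longrightarrow> - x \<in> A0" using A0_sm[of x "-1"] by (simp add: sm_neg1)
lemma A0_diff: "x \<in> A0 \<Longrightarrow> y \<in> A0 \<Longrightarrow> x - y \<in> A0" using A0_add[OF _ A0_neg] by (metis diff_conv_add_uminus)

lemma dense: "\<exists>s. (\<forall>n. s n \<in> A0) \<and> hconv Q s \<xi>"
  using A0_dense unfolding hclosure_def by blast

lemma ext_H: assumes "hcont Q f" "hcont Q g" "\<And>x. x \<in> A0 \<Longrightarrow> f x = g x" shows "f \<xi> = g \<xi>"
proof -
  obtain s where s: "\<And>n. s n \<in> A0" "hconv Q s \<xi>" using dense by blast
  have "hconv Q (\<lambda>n. f (s n)) (f \<xi>)" "hconv Q (\<lambda>n. g (s n)) (g \<xi>)"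
    using assms(1,2) s(2) by (auto simp: hcont_def)
  then show ?thesis using assms(3)[OF s(1)] hconv_unique by simp
qed

lemma ext_C: assumes "ccont f" "ccont g" "\<And>x. x \<in> A0 \<Longrightarrow> f x = g x" shows "f \<xi> = g \<xi>"
proof -
  obtain s where s: "\<And>n. s n \<in> A0" "hconv Q s \<xi>" using dense by blast
  have "(\<lambda>n. f (s n)) \<longlonglongrightarrow> f \<xi>" "(\<lambda>n. g (s n)) \<longlonglongrightarrow> g \<xi>"
    using assms(1,2) s(2) by (auto simp: ccont_def)
  then show ?thesis using assms(3)[OF s(1)] LIMSEQ_unique by simp
qed

lemma stst_H: "st (st \<xi>) = \<xi>"
  by (rule ext_H[OF hcont_comp[OF cont_st cont_st] hcont_id]) (simp add: stst)

lemma distr_H: "x \<in> A0 \<Longrightarrow> y \<in> A0 \<Longrightarrow> mul \<xi> (x + y) = mul \<xi> x + mul \<xi> y"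
  by (rule ext_H[OF cont_r hcont_add[OF cont_r cont_r]]) (auto simp: distr A0_add)

lemma mul_sm_H: "x \<in> A0 \<Longrightarrow> mul \<xi> (sm a x) = sm a (mul \<xi> x)"
  by (rule ext_H[OF cont_r hcont_sm[OF cont_r]]) (auto simp: mul_sm2 A0_sm)

lemma mul_zero_H: "mul \<xi> 0 = 0"
  using mul_sm_H[OF A0_zero, of \<xi> 0] by simp

lemma mul_diff_H: "x \<in> A0 \<Longrightarrow> y \<in> A0 \<Longrightarrow> mul \<xi> (x - y) = mul \<xi> x - mul \<xi> y"
  using distr_H[of x "-y" \<xi>] mul_sm_H[of y \<xi> "-1"] A0_neg by (simp add: sm_neg1)

lemma assoc_H: "x \<in> A0 \<Longrightarrow> y \<in> A0 \<Longrightarrow> mul \<xi> (mul y x) = mul (mul \<xi> y) x"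
  by (rule ext_H[OF cont_r hcont_comp[OF cont_r cont_r]]) (auto simp: assoc A0_mul)

lemma radj_A0: assumes "x \<in> A0" "z \<in> A0" "w \<in> A0"
  shows "ip (mul z x) w = ip z (mul w (st x))"
proof -
  have "ip (mul z x) w = ip (st w) (st (mul z x))"
    by (rule hiii[OF A0_mul[OF assms(2) assms(1)] assms(3)])
  also have "\<dots> = ip (st w) (mul (st x) (st z))" using st_mul[OF assms(2) assms(1)] by simp
  also have "\<dots> = ip (mul x (st w)) (st z)"
    by (rule hii[OF assms(1) A0_st[OF assms(3)] A0_st[OF assms(2)], symmetric])
  also have "\<dots> = ip (st (st z)) (st (mul x (st w)))"
    by (rule hiii[OF A0_mul[OF assms(1) A0_st[OF assms(3)]] A0_st[OF assms(2)]])
  also have "\<dots> = ip z (mul w (st x))"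
    using st_mul[OF assms(1) A0_st[OF assms(3)]] stst[OF assms(2)] stst[OF assms(3)] by simp
  finally show ?thesis .
qed

lemma radj: assumes "x \<in> A0"
  shows "ip (mul \<zeta> x) \<omega> = ip \<zeta> (mul \<omega> (st x))"
proof -
  have 1: "ip (mul \<zeta> x) w = ip \<zeta> (mul w (st x))" if "w \<in> A0" for w \<zeta>
    by (rule ext_C[OF ccont_ip[OF cont_r[OF assms]] ccont_ip[OF hcont_id]]) (use assms that radj_A0 in auto)
  show ?thesis
    by (rule ext_C[OF ccont_ip2[OF hcont_id] ccont_ip2[OF cont_r[OF A0_st[OF assms]]]]) (use 1 in auto)
qed

lemma ladj: assumes "x \<in> A0" "y \<in> A0"
  shows "ip (mul \<xi> x) y = ip x (mul (st \<xi>) y)"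
proof (rule ext_C[OF ccont_ip[OF cont_r[OF assms(1)]] ccont_ip2[OF hcont_comp[OF cont_st cont_r[OF assms(2)]]]])
  fix z assume "z \<in> A0"
  then show "ip (mul z x) y = ip x (mul (st z) y)" by (rule hii[OF _ assms])
qed


lemma A0_sum: "(\<And>i. i < (n::nat) \<Longrightarrow> v i \<in> A0) \<Longrightarrow> (\<Sum>i<n. sm (c i) (v i)) \<in> A0"
  by (induction n) (auto simp: A0_zero A0_add A0_sm)

lemma sq_sub: "alg_sq Q \<subseteq> A0"
  unfolding alg_sq_def hspan_def by (auto intro!: A0_sum simp: A0_mul)

lemma prod_sq: assumes "x \<in> A0" "y \<in> A0" shows "mul x y \<in> alg_sq Q"
  unfolding alg_sq_def hspan_def
  by (rule CollectI, rule exI[of _ 1], rule exI[of _ "\<lambda>_. 1"], rule exI[of _ "\<lambda>_. mul x y"]) (use assms in auto)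

lemma mul_sum_H: "(\<And>i. i < (n::nat) \<Longrightarrow> v i \<in> A0) \<Longrightarrow>
   mul \<xi> (\<Sum>i<n. sm (c i) (v i)) = (\<Sum>i<n. sm (c i) (mul \<xi> (v i)))"
proof (induction n)
  case 0 then show ?case by (simp add: mul_zero_H)
next
  case (Suc n)
  have "mul \<xi> (\<Sum>i<Suc n. sm (c i) (v i)) = mul \<xi> (\<Sum>i<n. sm (c i) (v i)) + mul \<xi> (sm (c n) (v n))"
    using Suc.prems by (simp add: distr_H A0_sum A0_sm)
  then show ?case using Suc by (simp add: mul_sm_H)
qed

lemma ip_sum: "ip (\<Sum>i<(n::nat). sm (c i) (u i)) z = (\<Sum>i<n. c i * ip (u i) z)"
  by (induction n) (auto simp: ip_add ip_sm)

lemma key1: assumes "x \<in> A0" "y \<in> A0"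
  and R: "\<And>x y. x \<in> A0 \<Longrightarrow> y \<in> A0 \<Longrightarrow> ip (mul \<eta> x) (mul \<xi> y) = ip (mul \<zeta> x) y"
  shows "ip (mul \<xi> (mul y x)) \<eta> = ip (mul y x) \<zeta>"
proof -
  have "ip (mul \<xi> (mul y x)) \<eta> = ip (mul (mul \<xi> y) x) \<eta>" using assms by (simp add: assoc_H)
  also have "\<dots> = ip (mul \<xi> y) (mul \<eta> (st x))" using assms by (simp add: radj)
  also have "\<dots> = cnj (ip (mul \<eta> (st x)) (mul \<xi> y))" by (rule ip_cnj)
  also have "\<dots> = cnj (ip (mul \<zeta> (st x)) y)" using assms by (simp add: R A0_st)
  also have "\<dots> = ip y (mul \<zeta> (st x))" by (simp add: ip_cnj[of y "mul \<zeta> (st x)"])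
  also have "\<dots> = ip (mul y x) \<zeta>" using assms by (simp add: radj)
  finally show ?thesis .
qed

lemma sq_to_R: assumes "\<eta> \<in> adj_dom Q (alg_sq Q) (Lop Q \<xi>)"
  shows "\<eta> \<in> right_mult Q (st \<xi>)"
proof -
  obtain \<zeta> where D: "\<And>z. z \<in> alg_sq Q \<Longrightarrow> ip (mul \<xi> z) \<eta> = ip z \<zeta>"
    using assms unfolding adj_dom_def Lop_def by blast
  show "\<eta> \<in> right_mult Q (st \<xi>)"
    unfolding right_mult_def stst_H
  proof (intro CollectI exI ballI)
    fix x y assume x: "x \<in> A0" and y: "y \<in> A0"
    have "ip (mul \<xi> y) (mul \<eta> x) = ip (mul (mul \<xi> y) (st x)) \<eta>"
      using x by (simp add: radj A0_st stst)
    also have "\<dots> = ip (mul \<xi> (mul y (st x))) \<eta>" using x y by (simp add: assoc_H A0_st)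
    also have "\<dots> = ip (mul y (st x)) \<zeta>" using x y by (simp add: D prod_sq A0_st)
    also have "\<dots> = ip y (mul \<zeta> x)" using x by (simp add: radj A0_st stst)
    finally have e: "ip (mul \<xi> y) (mul \<eta> x) = ip y (mul \<zeta> x)" .
    have "ip (mul \<eta> x) (mul \<xi> y) = cnj (ip (mul \<xi> y) (mul \<eta> x))" by (rule ip_cnj)
    also have "\<dots> = ip (mul \<zeta> x) y" unfolding e by (simp add: ip_cnj[of y "mul \<zeta> x"])
    finally show "ip (mul \<eta> x) (mul \<xi> y) = ip (mul \<zeta> x) y" .
  qed
qed

lemma part_i: "right_mult Q (st \<xi>) =
   {\<eta> \<in> adj_dom Q (alg_sq Q) (Lop Q \<xi>). \<forall>y\<in>A0. mul \<eta> y \<in> adj_dom Q A0 (Lop Q \<xi>)}"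
proof (intro set_eqI iffI)
  fix \<eta> assume "\<eta> \<in> right_mult Q (st \<xi>)"
  then obtain \<zeta> where R0: "\<forall>x\<in>A0. \<forall>y\<in>A0. ip (mul \<eta> x) (mul (st (st \<xi>)) y) = ip (mul \<zeta> x) y"
    unfolding right_mult_def by blast
  have R: "\<And>x y. x \<in> A0 \<Longrightarrow> y \<in> A0 \<Longrightarrow> ip (mul \<eta> x) (mul \<xi> y) = ip (mul \<zeta> x) y"
    using R0 unfolding stst_H by blast
  have a: "\<eta> \<in> adj_dom Q (alg_sq Q) (Lop Q \<xi>)"
    unfolding adj_dom_def Lop_def
  proof (intro CollectI exI ballI)
    fix z assume "z \<in> alg_sq Q"
    then have "\<exists>(n::nat) c v. (\<forall>i<n. v i \<in> {mul x y |x y. x \<in> A0 \<and> y \<in> A0}) \<and> z = (\<Sum>i<n. sm (c i) (v i))"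
      unfolding alg_sq_def hspan_def by (rule CollectD)
    then obtain n :: nat and c v where nv: "(\<forall>i<n. v i \<in> {mul x y |x y. x \<in> A0 \<and> y \<in> A0}) \<and> z = (\<Sum>i<n. sm (c i) (v i))"
      by blast
    have v: "\<And>i. i < n \<Longrightarrow> v i \<in> {mul x y |x y. x \<in> A0 \<and> y \<in> A0}" using nv by blast
    have z: "z = (\<Sum>i<n. sm (c i) (v i))" using nv by blast
    have vA: "v i \<in> A0" if hi: "i < n" for i
    proof -
      obtain a b where "v i = mul a b" "a \<in> A0" "b \<in> A0" using v[OF hi] by blast
      then show ?thesis using A0_mul by simp
    qed
    have "\<And>i. i < n \<Longrightarrow> ip (mul \<xi> (v i)) \<eta> = ip (v i) \<zeta>"
    proof -
      fix i assume "i < n"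
      then obtain a b where "v i = mul a b" "a \<in> A0" "b \<in> A0" using v by blast
      then show "ip (mul \<xi> (v i)) \<eta> = ip (v i) \<zeta>" using key1[of b a \<eta> \<xi> \<zeta>, OF _ _ R] by simp
    qed
    then show "ip (mul \<xi> z) \<eta> = ip z \<zeta>"
      unfolding z using vA by (simp add: mul_sum_H ip_sum)
  qed
  have b: "\<forall>y\<in>A0. mul \<eta> y \<in> adj_dom Q A0 (Lop Q \<xi>)"
  proof
    fix y assume y: "y \<in> A0"
    show "mul \<eta> y \<in> adj_dom Q A0 (Lop Q \<xi>)"
      unfolding adj_dom_def Lop_def
    proof (intro CollectI exI ballI)
      fix x assume x: "x \<in> A0"
      have "ip (mul \<xi> x) (mul \<eta> y) = cnj (ip (mul \<eta> y) (mul \<xi> x))" by (rule ip_cnj)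
      also have "\<dots> = cnj (ip (mul \<zeta> y) x)" using x y R by simp
      also have "\<dots> = ip x (mul \<zeta> y)" by (simp add: ip_cnj[of x "mul \<zeta> y"])
      finally show "ip (mul \<xi> x) (mul \<eta> y) = ip x (mul \<zeta> y)" .
    qed
  qed
  from a b show "\<eta> \<in> {\<eta> \<in> adj_dom Q (alg_sq Q) (Lop Q \<xi>). \<forall>y\<in>A0. mul \<eta> y \<in> adj_dom Q A0 (Lop Q \<xi>)}"
    by blast
next
  fix \<eta> assume "\<eta> \<in> {\<eta> \<in> adj_dom Q (alg_sq Q) (Lop Q \<xi>). \<forall>y\<in>A0. mul \<eta> y \<in> adj_dom Q A0 (Lop Q \<xi>)}"
  then show "\<eta> \<in> right_mult Q (st \<xi>)" using sq_to_R by blast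
qed

lemma part_ii: assumes "has_unit Q"
  shows "right_mult Q (st \<xi>) = adj_dom Q A0 (Lop Q \<xi>)"
proof
  obtain e where e: "e \<in> A0" "\<And>\<xi>. mul \<xi> e = \<xi>" using assms unfolding has_unit_def by blast
  show "right_mult Q (st \<xi>) \<subseteq> adj_dom Q A0 (Lop Q \<xi>)"
  proof
    fix \<eta> assume "\<eta> \<in> right_mult Q (st \<xi>)"
    then obtain \<zeta> where R0: "\<forall>x\<in>A0. \<forall>y\<in>A0. ip (mul \<eta> x) (mul (st (st \<xi>)) y) = ip (mul \<zeta> x) y"
      unfolding right_mult_def by blast
    have R: "\<And>x y. x \<in> A0 \<Longrightarrow> y \<in> A0 \<Longrightarrow> ip (mul \<eta> x) (mul \<xi> y) = ip (mul \<zeta> x) y"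
      using R0 unfolding stst_H by blast
    show "\<eta> \<in> adj_dom Q A0 (Lop Q \<xi>)"
      unfolding adj_dom_def Lop_def
    proof (intro CollectI exI ballI)
      fix y assume y: "y \<in> A0"
      have "ip \<eta> (mul \<xi> y) = ip \<zeta> y" using R[OF e(1) y] e(2) by simp
      then show "ip (mul \<xi> y) \<eta> = ip y \<zeta>" using ip_cnj[of "mul \<xi> y" \<eta>] ip_cnj[of y \<zeta>] by simp
    qed
  qed
  show "adj_dom Q A0 (Lop Q \<xi>) \<subseteq> right_mult Q (st \<xi>)"
  proof
    fix \<eta> assume "\<eta> \<in> adj_dom Q A0 (Lop Q \<xi>)"
    then have "\<eta> \<in> adj_dom Q (alg_sq Q) (Lop Q \<xi>)" using sq_sub unfolding adj_dom_def by blast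
    then show "\<eta> \<in> right_mult Q (st \<xi>)" by (rule sq_to_R)
  qed
qed

lemma aux3: "(a::real) \<le> 3/2 * b \<Longrightarrow> b \<le> c \<Longrightarrow> c < e/2 \<Longrightarrow> 0 < e \<Longrightarrow> a < e"
  by linarith

lemma gliding_hump:
  fixes w :: "nat \<Rightarrow> real"
  assumes vpos: "\<And>n. nm (v n) > 0" and wpos: "\<And>n. w n > 0"
    and big: "\<And>n. w n * nm (v n) \<ge> 4^n"
    and pw: "\<And>\<eta>. \<exists>M. \<forall>n. w n * cmod (ip \<eta> (v n)) \<le> M"
  shows False
proof -
  define r :: "nat \<Rightarrow> real" where "r n = (1/3)^n" for n
  have rpos: "r n > 0" for n by (simp add: r_def)
  define h where "h n \<sigma> = sm (complex_of_real (\<sigma> * (r n / nm (v n)))) (v n)" for n \<sigma>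
  define step where "step n e = (if cmod (ip (e + h n 1) (v n)) \<ge> r n * nm (v n) then e + h n 1 else e + h n (-1))" for n e
  define \<eta> where "\<eta> = rec_nat 0 step"
  have \<eta>S: "\<eta> (Suc n) = step n (\<eta> n)" for n by (simp add: \<eta>_def)
  have \<eta>0: "\<eta> 0 = 0" by (simp add: \<eta>_def)
  have hip: "ip (h n \<sigma>) (v n) = complex_of_real (\<sigma> * r n * nm (v n))" for n \<sigma>
  proof -
    have "ip (h n \<sigma>) (v n) = complex_of_real (\<sigma> * (r n / nm (v n))) * complex_of_real ((nm (v n))^2)"
      by (simp add: h_def ip_sm ip_self)
    also have "\<dots> = complex_of_real (\<sigma> * r n * nm (v n))"
      using vpos[of n] by (simp add: power2_eq_square field_simps)
    finally show ?thesis .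
  qed
  have hnm: "nm (h n \<sigma>) = r n" if "\<sigma> = 1 \<or> \<sigma> = -1" for n \<sigma>
  proof -
    have "nm (h n \<sigma>) = \<bar>\<sigma> * (r n / nm (v n))\<bar> * nm (v n)" by (simp only: h_def nm_sm norm_of_real)
    also have "\<dots> = r n" using that vpos[of n] rpos[of n] by (auto simp: abs_mult)
    finally show ?thesis .
  qed
  have lower: "cmod (ip (\<eta> (Suc n)) (v n)) \<ge> r n * nm (v n)" for n
  proof (cases "cmod (ip (\<eta> n + h n 1) (v n)) \<ge> r n * nm (v n)")
    case True then show ?thesis by (simp add: \<eta>S step_def)
  next
    case False
    define a where "a = ip (\<eta> n) (v n)"
    define b where "b = complex_of_real (r n * nm (v n))"
    have p: "ip (\<eta> n + h n 1) (v n) = a + b" by (simp add: ip_add hip a_def b_def)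
    have m: "ip (\<eta> n + h n (-1)) (v n) = a - b" by (simp add: ip_add hip a_def b_def)
    have cb: "cmod b = r n * nm (v n)" unfolding b_def norm_of_real using rpos[of n] vpos[of n] by simp
    have "cmod (2 * b) \<le> cmod (a + b) + cmod (a - b)"
      using norm_triangle_ineq4[of "a + b" "a - b"] by (simp add: algebra_simps)
    then have "cmod (a - b) \<ge> r n * nm (v n)" using False p cb by (simp add: norm_mult)
    then show ?thesis using False by (simp add: \<eta>S step_def m)
  qed
  have stepnm: "nm (\<eta> (Suc n) - \<eta> n) = r n" for n
    by (simp add: \<eta>S step_def hnm)
  have dist: "nm (\<eta> m - \<eta> n) \<le> 3/2 * ((1/3)^n - (1/3)^m)" if "n \<le> m" for n m
    using that
  proof (induction m rule: dec_induct)
    case base then show ?case by simp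
  next
    case (step m)
    have "nm (\<eta> (Suc m) - \<eta> n) \<le> nm (\<eta> (Suc m) - \<eta> m) + nm (\<eta> m - \<eta> n)" by (rule triangle_diff)
    also have "\<dots> \<le> (1/3)^m + 3/2 * ((1/3)^n - (1/3)^m)" using step.IH stepnm[of m] by (simp add: r_def)
    also have "\<dots> = 3/2 * ((1/3)^n - (1/3)^(Suc m))" by (simp add: field_simps)
    finally show ?case .
  qed
  have dist': "nm (\<eta> m - \<eta> n) \<le> 3/2 * (1/3)^n" if "n \<le> m" for n m
  proof -
    have "3/2 * ((1/3)^n - (1/3)^m) \<le> 3/2 * (1/3::real)^n" by simp
    then show ?thesis using dist[OF that] by (rule order_trans[rotated])
  qed
  have "hcauchy Q \<eta>"
    unfolding hcauchy_def
  proof (intro allI impI)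
    fix e :: real assume e: "e > 0"
    obtain N where N: "(1/3::real)^N < e / 2" using real_arch_pow_inv[of "e/2" "1/3"] e by auto
    show "\<exists>N. \<forall>m\<ge>N. \<forall>n\<ge>N. nm (\<eta> m - \<eta> n) < e"
    proof (intro exI allI impI)
      fix m n assume mn: "m \<ge> N" "n \<ge> N"
      have pm: "(1/3::real)^n \<le> (1/3)^N" "(1/3::real)^m \<le> (1/3)^N" using mn by (simp_all add: power_decreasing)
      show "nm (\<eta> m - \<eta> n) < e"
      proof (cases "n \<le> m")
        case True show ?thesis by (rule aux3[OF dist'[OF True] pm(1) N e])
      next
        case False then have "m \<le> n" by simp
        then show ?thesis using aux3[OF dist'[of m n] pm(2) N e] nm_commute[of "\<eta> m" "\<eta> n"] by simp
      qed
    qed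
  qed
  then obtain L where L: "hconv Q \<eta> L" using complete by blast
  have tail: "nm (L - \<eta> (Suc n)) \<le> 1/2 * r n" for n
  proof -
    have "(\<lambda>m. nm (\<eta> m - \<eta> (Suc n))) \<longlonglongrightarrow> nm (L - \<eta> (Suc n))"
      by (rule hconv_nm[OF hconv_diff[OF L hconv_const]])
    moreover have "\<exists>N. \<forall>m\<ge>N. nm (\<eta> m - \<eta> (Suc n)) \<le> 1/2 * r n"
    proof (intro exI[of _ "Suc n"] allI impI)
      fix m assume "Suc n \<le> m"
      then have "nm (\<eta> m - \<eta> (Suc n)) \<le> 3/2 * (1/3)^(Suc n)" by (rule dist')
      also have "3/2 * (1/3::real)^(Suc n) = 1/2 * r n" by (simp add: r_def)
      finally show "nm (\<eta> m - \<eta> (Suc n)) \<le> 1/2 * r n" .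
    qed
    ultimately show ?thesis by (rule LIMSEQ_le_const2)
  qed
  have low2: "cmod (ip L (v n)) \<ge> 1/2 * r n * nm (v n)" for n
  proof -
    have e: "ip L (v n) = ip (\<eta> (Suc n)) (v n) + ip (L - \<eta> (Suc n)) (v n)" by (simp add: ip_diff)
    have "cmod (ip (L - \<eta> (Suc n)) (v n)) \<le> 1/2 * r n * nm (v n)"
      by (rule order_trans[OF cauchy_schwarz mult_right_mono[OF tail[of n] nm_ge0]])
    moreover have "cmod (ip L (v n)) \<ge> cmod (ip (\<eta> (Suc n)) (v n)) - cmod (ip (L - \<eta> (Suc n)) (v n))"
      unfolding e by (rule norm_diff_ineq)
    ultimately show ?thesis using lower[of n] by linarith
  qed
  obtain M where M: "\<And>n. w n * cmod (ip L (v n)) \<le> M" using pw by blast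
  have "(4/3::real)^n \<le> 2 * M" for n
  proof -
    have "(4/3::real)^n = (1/3 * 4)^n" by simp
    also have "\<dots> = r n * 4^n" unfolding r_def by (rule power_mult_distrib)
    also have "\<dots> \<le> r n * (w n * nm (v n))" by (rule mult_left_mono[OF big[of n] less_imp_le[OF rpos[of n]]])
    also have "\<dots> = 2 * (w n * (1/2 * r n * nm (v n)))" by (simp add: algebra_simps)
    also have "\<dots> \<le> 2 * (w n * cmod (ip L (v n)))"
      using mult_left_mono[OF low2[of n] less_imp_le[OF wpos[of n]]] by simp
    also have "\<dots> \<le> 2 * M" using M[of n] by simp
    finally show ?thesis .
  qed
  moreover obtain n where "2 * M < (4/3::real)^n" using real_arch_pow[of "4/3" "2*M"] by auto
  ultimately show False using not_le by blast
qed

lemma ubp: assumes pw: "\<And>\<eta>. \<exists>M. \<forall>x\<in>A0. cmod (ip \<eta> (mul \<xi> x)) \<le> M * nm x"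
  shows "\<exists>C\<ge>0. \<forall>x\<in>A0. nm (mul \<xi> x) \<le> C * nm x"
proof (rule ccontr)
  assume neg: "\<not> ?thesis"
  have ex: "\<exists>x. x \<in> A0 \<and> nm (mul \<xi> x) > 4^n * nm x" for n :: nat
  proof (rule ccontr)
    assume "\<not> (\<exists>x. x \<in> A0 \<and> nm (mul \<xi> x) > 4^n * nm x)"
    then have "\<forall>x\<in>A0. nm (mul \<xi> x) \<le> 4^n * nm x" by (auto simp: not_less)
    moreover have "(4::real)^n \<ge> 0" by simp
    ultimately have "(4::real)^n \<ge> 0 \<and> (\<forall>x\<in>A0. nm (mul \<xi> x) \<le> 4^n * nm x)" by (rule conjI[rotated])
    then have "\<exists>C\<ge>0. \<forall>x\<in>A0. nm (mul \<xi> x) \<le> C * nm x" by (rule exI)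
    then show False using neg by (rule notE[rotated])
  qed
  have "\<forall>n. \<exists>x. x \<in> A0 \<and> nm (mul \<xi> x) > 4^n * nm x" by (rule allI, rule ex)
  from choice[OF this] obtain x where xx: "\<forall>n. x n \<in> A0 \<and> nm (mul \<xi> (x n)) > 4^n * nm (x n)"
    by (elim exE)
  have x: "\<And>n. x n \<in> A0" "\<And>n. nm (mul \<xi> (x n)) > 4^n * nm (x n)" using xx by simp_all
  have xpos: "nm (x n) > 0" for n
  proof (rule ccontr)
    assume "\<not> nm (x n) > 0"
    then have "x n = 0" using nm_ge0[of "x n"] by simp
    then show False using x(2)[of n] by (simp add: mul_zero_H)
  qed
  show False
  proof (rule gliding_hump[of "\<lambda>n. mul \<xi> (x n)" "\<lambda>n. 1 / nm (x n)"])
    fix n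
    have "(4::real)^n * nm (x n) \<ge> 0" using xpos[of n] by simp
    then show "nm (mul \<xi> (x n)) > 0" using x(2)[of n] by linarith
    show "1 / nm (x n) > 0" using xpos[of n] by simp
    show "1 / nm (x n) * nm (mul \<xi> (x n)) \<ge> 4^n"
      using x(2)[of n] xpos[of n] by (simp add: pos_le_divide_eq less_imp_le)
  next
    fix \<eta>
    obtain M where M: "\<forall>x\<in>A0. cmod (ip \<eta> (mul \<xi> x)) \<le> M * nm x" using pw by blast
    show "\<exists>M. \<forall>n. 1 / nm (x n) * cmod (ip \<eta> (mul \<xi> (x n))) \<le> M"
    proof (intro exI allI)
      fix n
      show "1 / nm (x n) * cmod (ip \<eta> (mul \<xi> (x n))) \<le> M"
        using M x(1)[of n] xpos[of n] by (simp add: pos_divide_le_eq)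
    qed
  qed
qed

lemma dense_bound: assumes "C \<ge> 0" and b: "\<And>x. x \<in> A0 \<Longrightarrow> cmod (ip x v) \<le> C * nm x"
  shows "nm v \<le> C"
proof -
  obtain s where s: "\<And>n. s n \<in> A0" "hconv Q s v" using dense by blast
  have "(\<lambda>n. cmod (ip (s n) v)) \<longlonglongrightarrow> cmod (ip v v)" by (rule tendsto_norm[OF hconv_ip[OF s(2)]])
  moreover have "(\<lambda>n. C * nm (s n)) \<longlonglongrightarrow> C * nm v" by (rule tendsto_mult_left[OF hconv_nm[OF s(2)]])
  ultimately have "cmod (ip v v) \<le> C * nm v"
    by (rule LIMSEQ_le) (use b s(1) in auto)
  moreover have "cmod (ip v v) = (nm v)^2" unfolding ip_self norm_of_real by simp
  ultimately have "(nm v)^2 \<le> C * nm v" by simp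
  then show ?thesis using nm_ge0[of v]
    by (cases "nm v = 0") (use assms(1) in \<open>auto simp: power2_eq_square\<close>)
qed

lemma star_bound: assumes "C \<ge> 0" "\<And>x. x \<in> A0 \<Longrightarrow> nm (mul \<xi> x) \<le> C * nm x" and y: "y \<in> A0"
  shows "nm (mul (st \<xi>) y) \<le> C * nm y"
proof (rule dense_bound)
  show "C * nm y \<ge> 0" using assms nm_ge0 by simp
  fix x assume x: "x \<in> A0"
  have "cmod (ip x (mul (st \<xi>) y)) = cmod (ip (mul \<xi> x) y)" using ladj[OF x y] by simp
  also have "\<dots> \<le> nm (mul \<xi> x) * nm y" by (rule cauchy_schwarz)
  also have "\<dots> \<le> C * nm x * nm y" using assms(2)[OF x] nm_ge0 by (simp add: mult_right_mono)
  finally show "cmod (ip x (mul (st \<xi>) y)) \<le> C * nm y * nm x" by (simp add: mult_ac)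
qed

lemma bound_graph: assumes C: "C \<ge> 0" and b: "\<And>x. x \<in> A0 \<Longrightarrow> nm (mul \<xi> x) \<le> C * nm x"
  shows "bounded_operator_graph Q (closure_graph Q A0 (Lop Q \<xi>))"
  unfolding bounded_operator_graph_def
proof (intro conjI allI)
  fix u
  obtain s where s: "\<And>n. s n \<in> A0" "hconv Q s u" using dense by blast
  have "hcauchy Q (\<lambda>n. mul \<xi> (s n))"
    unfolding hcauchy_def
  proof (intro allI impI)
    fix e :: real assume e: "e > 0"
    then have "e / (C + 1) > 0" using C by simp
    then obtain N where N: "\<And>m n. m \<ge> N \<Longrightarrow> n \<ge> N \<Longrightarrow> nm (s m - s n) < e / (C + 1)"
      using hconv_cauchy[OF s(2)] unfolding hcauchy_def by blast
    show "\<exists>N. \<forall>m\<ge>N. \<forall>n\<ge>N. nm (mul \<xi> (s m) - mul \<xi> (s n)) < e"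
    proof (intro exI allI impI)
      fix m n assume mn: "m \<ge> N" "n \<ge> N"
      have "nm (mul \<xi> (s m) - mul \<xi> (s n)) = nm (mul \<xi> (s m - s n))" using s(1) by (simp add: mul_diff_H)
      also have "\<dots> \<le> C * nm (s m - s n)" using b s(1) A0_diff by blast
      also have "\<dots> \<le> C * (e / (C + 1))" using mult_left_mono[OF less_imp_le[OF N[OF mn]] C] .
      also have "\<dots> < e" using C e by (simp add: field_simps)
      finally show "nm (mul \<xi> (s m) - mul \<xi> (s n)) < e" .
    qed
  qed
  then obtain v where "hconv Q (\<lambda>n. mul \<xi> (s n)) v" using complete by blast
  then have "(u, v) \<in> closure_graph Q A0 (Lop Q \<xi>)"
    unfolding closure_graph_def Lop_def using s by blast
  then show "\<exists>v. (u, v) \<in> closure_graph Q A0 (Lop Q \<xi>)" by blast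
next
  show "\<exists>C. \<forall>(u, v)\<in>closure_graph Q A0 (Lop Q \<xi>). nm v \<le> C * nm u"
  proof (rule exI[of _ C])
  show "\<forall>(u, v)\<in>closure_graph Q A0 (Lop Q \<xi>). nm v \<le> C * nm u"
  proof (clarsimp simp: closure_graph_def Lop_def)
    fix u v s assume s: "\<forall>n. s n \<in> A0" "hconv Q s u" "hconv Q (\<lambda>n. mul \<xi> (s n)) v"
    show "nm v \<le> C * nm u"
      by (rule LIMSEQ_le[OF hconv_nm[OF s(3)] tendsto_mult_left[OF hconv_nm[OF s(2)]]])
         (use b s(1) in auto)
  qed
  qed
qed

lemma part_iii: assumes "has_unit Q" "right_mult Q (st \<xi>) = UNIV"
  shows "bounded_operator_graph Q (closure_graph Q A0 (Lop Q \<xi>)) \<and>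
         bounded_operator_graph Q (closure_graph Q A0 (Lop Q (st \<xi>)))"
proof -
  have D: "adj_dom Q A0 (Lop Q \<xi>) = UNIV" using part_ii[OF assms(1)] assms(2) by simp
  have pb: "\<exists>M. \<forall>x\<in>A0. cmod (ip \<eta> (mul \<xi> x)) \<le> M * nm x" for \<eta>
  proof -
    have "\<eta> \<in> adj_dom Q A0 (Lop Q \<xi>)" using D by simp
    then obtain \<zeta> where z: "\<And>x. x \<in> A0 \<Longrightarrow> ip (mul \<xi> x) \<eta> = ip x \<zeta>"
      unfolding adj_dom_def Lop_def by blast
    show ?thesis
    proof (intro exI ballI)
      fix x assume x: "x \<in> A0"
      have "cmod (ip \<eta> (mul \<xi> x)) = cmod (ip (mul \<xi> x) \<eta>)" by (subst ip_cnj) (rule complex_mod_cnj)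
      also have "\<dots> = cmod (ip x \<zeta>)" using z[OF x] by simp
      also have "\<dots> \<le> nm \<zeta> * nm x" using cauchy_schwarz[of x \<zeta>] by (simp add: mult.commute)
      finally show "cmod (ip \<eta> (mul \<xi> x)) \<le> nm \<zeta> * nm x" .
    qed
  qed
  obtain C where C0: "C \<ge> 0 \<and> (\<forall>x\<in>A0. nm (mul \<xi> x) \<le> C * nm x)" using ubp[OF pb] by (elim exE)
  then have C: "C \<ge> 0" "\<And>x. x \<in> A0 \<Longrightarrow> nm (mul \<xi> x) \<le> C * nm x" by simp_all
  show ?thesis
    by (rule conjI[OF bound_graph[OF C] bound_graph[OF C(1) star_bound[OF C]]])
qed

end

theorem mainTheorem8:
  fixes Q :: "('h::ab_group_add) qsa" and \<xi> :: 'h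
  assumes "hilbert_quasi_star_algebra Q"
  shows "right_mult Q (star Q \<xi>) =
           {\<eta> \<in> adj_dom Q (alg_sq Q) (Lop Q \<xi>).
              \<forall>y\<in>alg Q. mult Q \<eta> y \<in> adj_dom Q (alg Q) (Lop Q \<xi>)}
         \<and> (has_unit Q \<longrightarrow> right_mult Q (star Q \<xi>) = adj_dom Q (alg Q) (Lop Q \<xi>))
         \<and> (has_unit Q \<and> right_mult Q (star Q \<xi>) = UNIV \<longrightarrow>
              bounded_operator_graph Q (closure_graph Q (alg Q) (Lop Q \<xi>)) \<and>
              bounded_operator_graph Q (closure_graph Q (alg Q) (Lop Q (star Q \<xi>))))"
proof -
  have c: "complex_hilbert_space Q" using assms unfolding hilbert_quasi_star_algebra_def by (rule conjunct1)
  interpret qsa Q by (rule qsa.intro[OF chs.intro[OF c] qsa_axioms.intro[OF assms]])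
  show ?thesis
  proof (intro conjI impI)
    show "right_mult Q (star Q \<xi>) =
           {\<eta> \<in> adj_dom Q (alg_sq Q) (Lop Q \<xi>).
              \<forall>y\<in>alg Q. mult Q \<eta> y \<in> adj_dom Q (alg Q) (Lop Q \<xi>)}" by (rule part_i)
  next
    assume "has_unit Q"
    then show "right_mult Q (star Q \<xi>) = adj_dom Q (alg Q) (Lop Q \<xi>)" by (rule part_ii)
  next
    assume h: "has_unit Q \<and> right_mult Q (star Q \<xi>) = UNIV"
    show "bounded_operator_graph Q (closure_graph Q (alg Q) (Lop Q \<xi>))"
      using part_iii[OF conjunct1[OF h] conjunct2[OF h]] by (rule conjunct1)
  next
    assume h: "has_unit Q \<and> right_mult Q (star Q \<xi>) = UNIV"
    show "bounded_operator_graph Q (closure_graph Q (alg Q) (Lop Q (star Q \<xi>)))"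
      using part_iii[OF conjunct1[OF h] conjunct2[OF h]] by (rule conjunct2)
  qed
qed

end
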